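(* Let $M$ be a finite regular cell complex with weights $w_\sigma>0$ on its cells, and let $d\ge 1$. For every combinatorial differential $d$-form $\omega\in\Omega^d(M)$, $$d^*\omega = p\big(\partial^*\circ\omega - (-1)^{d-1}\,\omega\circ\partial^*\big),$$ where $p$ is the orthogonal projection from the space of linear maps $C_*(M)\to C_*(M)$ of degree $d-1$ onto $\Omega^{d-1}(M)$.
   Context: $C_*(M)=\bigoplus_p C_p(M)$ is the real cellular chain complex of $M$ with boundary $\partial$, each cell carrying a fixed orientation; $C_p(M)=0$ for $p<0$ or $p>\dim M$. Inner product on $C_*(M)$: $\langle\sigma,\sigma'\rangle=\delta_{\sigma,\sigma'}w_\sigma$ for oriented cells $\sigma,\sigma'$; $\partial^*$ is the adjoint of $\partial$ with respect to it. A linear map $\omega:C_*(M)\to C_*(M)$ has degree $d$ if $\omega(C_p(M))\subset C_{p-d}(M)$ for all $p$; it is local if for each oriented $p$-cell $\alpha$, $\omega(\alpha)$ is a linear combination of $(p-d)$-cells that are faces of $\alpha$. $\Omega^d(M)$ is the space of local linear maps of degree $d$ (combinatorial differential $d$-forms). On linear maps of degree $d$ define the $L^2$ inner product $\langle u,v\rangle=\sum_\sigma \frac{1}{w_\sigma}\langle u(\sigma),v(\sigma)\rangle$ (sum over all cells). The differential $d:\Omega^{d-1}(M)\to\Omega^{d}(M)$ is $dv=\partial\circ v-(-1)^{d-1}v\circ\partial$, and $d^*:\Omega^d(M)\to\Omega^{d-1}(M)$ is its adjoint: $\langle d^*u,v\rangle=\langle u,dv\rangle$ for all $u\in\Omega^d(M)$,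 $v\in\Omega^{d-1}(M)$. *)

theory Defs
  imports Complex_Main
begin

text \<open>
  Cells are elements of the set C (of an arbitrary type 'c); dm gives the
  dimension of a cell (dm); face t s means that t is a face of s (reflexive);
  bd t s is the coefficient of the oriented cell t in the boundary of the
  oriented cell s (incidence number, determined by the fixed orientations).
  Chains are functions 'c => real (only values on C matter); a linear map
  C_*(M) -> C_*(M) is represented by its matrix A in the cell basis:
  A t s is the coefficient of t in A(s).
\<close>

definition regular_cell_complex ::
  "'c set \<Rightarrow> ('c \<Rightarrow> nat) \<Rightarrow> ('c \<Rightarrow> 'c \<Rightarrow> bool) \<Rightarrow> ('c \<Rightarrow> 'c \<Rightarrow> real) \<Rightarrow> bool" where
  "regular_cell_complex C dm face bd \<longleftrightarrow>
     finite C
   \<and> (\<forall>t s. face t s \<longrightarrow> t \<in> C \<and> s \<in> C)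
   \<and> (\<forall>s\<in>C. face s s)
   \<and> (\<forall>r s t. face r s \<longrightarrow> face s t \<longrightarrow> face r t)
   \<and> (\<forall>t s. face t s \<longrightarrow> dm t \<le> dm s)
   \<and> (\<forall>t s. face t s \<longrightarrow> dm t = dm s \<longrightarrow> t = s)
   \<and> (\<forall>t s. face t s \<longrightarrow> dm t < dm s \<longrightarrow>
          (\<exists>r. face t r \<and> face r s \<and> dm r + 1 = dm s))
   \<and> (\<forall>t s. bd t s \<in> {-1, 0, 1})
   \<and> (\<forall>t s. bd t s \<noteq> 0 \<longleftrightarrow> face t s \<and> dm t + 1 = dm s)
   \<and> (\<forall>r s. (\<Sum>t\<in>C. bd r t * bd t s) = 0)"

type_synonym 'c lmap = "'c \<Rightarrow> 'c \<Rightarrow> real"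

definition on_cells :: "'c set \<Rightarrow> 'c lmap \<Rightarrow> bool" where
  "on_cells C A \<longleftrightarrow> (\<forall>t s. A t s \<noteq> 0 \<longrightarrow> t \<in> C \<and> s \<in> C)"

definition has_degree :: "'c set \<Rightarrow> ('c \<Rightarrow> nat) \<Rightarrow> nat \<Rightarrow> 'c lmap \<Rightarrow> bool" where
  "has_degree C dm k A \<longleftrightarrow> on_cells C A \<and> (\<forall>t s. A t s \<noteq> 0 \<longrightarrow> dm t + k = dm s)"

text \<open>Omega^k(M): local linear maps of degree k.\<close>
definition forms :: "'c set \<Rightarrow> ('c \<Rightarrow> nat) \<Rightarrow> ('c \<Rightarrow> 'c \<Rightarrow> bool) \<Rightarrow> nat \<Rightarrow> 'c lmap set" where
  "forms C dm face k = {A. has_degree C dm k A \<and> (\<forall>t s. A t s \<noteq> 0 \<longrightarrow> face t s)}"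

definition comp :: "'c set \<Rightarrow> 'c lmap \<Rightarrow> 'c lmap \<Rightarrow> 'c lmap" where
  "comp C A B = (\<lambda>t s. \<Sum>r\<in>C. A t r * B r s)"

definition app :: "'c set \<Rightarrow> 'c lmap \<Rightarrow> ('c \<Rightarrow> real) \<Rightarrow> ('c \<Rightarrow> real)" where
  "app C A x = (\<lambda>t. \<Sum>s\<in>C. A t s * x s)"

definition chain_inner :: "'c set \<Rightarrow> ('c \<Rightarrow> real) \<Rightarrow> ('c \<Rightarrow> real) \<Rightarrow> ('c \<Rightarrow> real) \<Rightarrow> real" where
  "chain_inner C w x y = (\<Sum>s\<in>C. x s * y s * w s)"

definition adjoint :: "'c set \<Rightarrow> ('c \<Rightarrow> real) \<Rightarrow> 'c lmap \<Rightarrow> 'c lmap" where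
  "adjoint C w A = (THE B. on_cells C B \<and>
     (\<forall>x y. chain_inner C w (app C A x) y = chain_inner C w x (app C B y)))"

definition l2_inner :: "'c set \<Rightarrow> ('c \<Rightarrow> real) \<Rightarrow> 'c lmap \<Rightarrow> 'c lmap \<Rightarrow> real" where
  "l2_inner C w u v = (\<Sum>s\<in>C. (1 / w s) * chain_inner C w (\<lambda>t. u t s) (\<lambda>t. v t s))"

definition cdiff :: "'c set \<Rightarrow> 'c lmap \<Rightarrow> nat \<Rightarrow> 'c lmap \<Rightarrow> 'c lmap" where
  "cdiff C bd d v = (\<lambda>t s. comp C bd v t s - (-1) ^ (d - 1) * comp C v bd t s)"

definition codiff :: "'c set \<Rightarrow> ('c \<Rightarrow> nat) \<Rightarrow> ('c \<Rightarrow> 'c \<Rightarrow> bool) \<Rightarrow> ('c \<Rightarrow> real)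
    \<Rightarrow> 'c lmap \<Rightarrow> nat \<Rightarrow> 'c lmap \<Rightarrow> 'c lmap" where
  "codiff C dm face w bd d u = (THE u'. u' \<in> forms C dm face (d - 1) \<and>
     (\<forall>v\<in>forms C dm face (d - 1). l2_inner C w u' v = l2_inner C w u (cdiff C bd d v)))"

definition orth_proj :: "'c set \<Rightarrow> ('c \<Rightarrow> nat) \<Rightarrow> ('c \<Rightarrow> 'c \<Rightarrow> bool) \<Rightarrow> ('c \<Rightarrow> real)
    \<Rightarrow> nat \<Rightarrow> 'c lmap \<Rightarrow> 'c lmap" where
  "orth_proj C dm face w k A = (THE B. B \<in> forms C dm face k \<and>
     (\<forall>v\<in>forms C dm face k. l2_inner C w (\<lambda>t s. A t s - B t s) v = 0))"

end

theory Submission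
  imports Defs
begin

definition adj0 :: "'c set \<Rightarrow> ('c \<Rightarrow> real) \<Rightarrow> 'c lmap \<Rightarrow> 'c lmap" where
  "adj0 C w bd = (\<lambda>t s. if t \<in> C \<and> s \<in> C then bd s t * w s / w t else 0)"

lemma adj0_prop:
  assumes "finite C" "\<forall>s\<in>C. w s > 0"
  shows "chain_inner C w (app C bd x) y = chain_inner C w x (app C (adj0 C w bd) y)"
proof -
  have "chain_inner C w (app C bd x) y = (\<Sum>t\<in>C. \<Sum>s\<in>C. bd t s * x s * y t * w t)"
    unfolding chain_inner_def app_def by (simp add: sum_distrib_right)
  also have "\<dots> = (\<Sum>s\<in>C. \<Sum>t\<in>C. bd t s * x s * y t * w t)"
    by (rule sum.swap)
  also have "\<dots> = (\<Sum>s\<in>C. \<Sum>t\<in>C. x s * (adj0 C w bd s t * y t) * w s)"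
    apply (rule sum.cong, simp, rule sum.cong, simp)
    using assms(2) by (auto simp: adj0_def)
  also have "\<dots> = chain_inner C w x (app C (adj0 C w bd) y)"
    unfolding chain_inner_def app_def by (simp add: sum_distrib_right sum_distrib_left)
  finally show ?thesis .
qed

lemma delta_eval:
  assumes "finite C" "a \<in> C" "b \<in> C"
  shows "chain_inner C w (\<lambda>r. if r = a then 1 else 0) (app C B (\<lambda>r. if r = b then 1 else 0)) = B a b * w a"
proof -
  have "(\<Sum>s\<in>C. B a s * (if s = b then 1 else 0)) = (\<Sum>s\<in>C. if s = b then B a s else 0)"
    by (rule sum.cong) auto
  then show ?thesis using assms unfolding chain_inner_def app_def by (simp add: if_distrib[of "\<lambda>z. z * _"] cong: if_cong)
qed

lemma adjoint_eq:
  assumes "finite C" "\<forall>s\<in>C. w s > 0"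
  shows "adjoint C w bd = adj0 C w bd"
  unfolding adjoint_def
proof (rule the_equality)
  show "on_cells C (adj0 C w bd) \<and> (\<forall>x y. chain_inner C w (app C bd x) y = chain_inner C w x (app C (adj0 C w bd) y))"
    using adj0_prop[OF assms] by (auto simp: on_cells_def adj0_def split: if_splits)
next
  fix B assume h: "on_cells C B \<and> (\<forall>x y. chain_inner C w (app C bd x) y = chain_inner C w x (app C B y))"
  show "B = adj0 C w bd"
  proof (intro ext)
    fix a b
    show "B a b = adj0 C w bd a b"
    proof (cases "a \<in> C \<and> b \<in> C")
      case True
      let ?x = "\<lambda>r. if r = a then 1 else (0::real)" and ?y = "\<lambda>r. if r = b then 1 else (0::real)"
      have "B a b * w a = adj0 C w bd a b * w a"
        using h adj0_prop[OF assms, of bd ?x ?y] delta_eval[OF assms(1) True[THEN conjunct1] True[THEN conjunct2]]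
        by metis
      moreover have "w a > 0" using True assms by auto
      ultimately show ?thesis by simp
    next
      case False
      then show ?thesis using h by (auto simp: on_cells_def adj0_def)
    qed
  qed
qed

lemma l2_expand:
  "l2_inner C w u v = (\<Sum>s\<in>C. \<Sum>t\<in>C. u t s * v t s * w t / w s)"
  unfolding l2_inner_def chain_inner_def by (simp add: sum_distrib_left algebra_simps)

lemma l2_diff:
  "l2_inner C w (\<lambda>t s. A t s - B t s) v = l2_inner C w A v - l2_inner C w B v"
  unfolding l2_expand by (simp add: sum_subtractf[symmetric] algebra_simps diff_divide_distrib)

lemma key:
  assumes "finite C" "\<forall>s\<in>C. w s > 0"
  shows "l2_inner C w \<omega> (cdiff C bd d v) =
    l2_inner C w (\<lambda>t s. comp C (adj0 C w bd) \<omega> t s - (-1) ^ (d - 1) * comp C \<omega> (adj0 C w bd) t s) v"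
proof -
  have e1: "l2_inner C w \<omega> (comp C bd v) = l2_inner C w (comp C (adj0 C w bd) \<omega>) v"
  proof -
    have "l2_inner C w \<omega> (comp C bd v) = (\<Sum>s\<in>C. \<Sum>t\<in>C. \<Sum>r\<in>C. \<omega> t s * bd t r * v r s * w t / w s)"
      unfolding l2_expand comp_def by (simp add: sum_distrib_left sum_distrib_right sum_divide_distrib algebra_simps)
    also have "\<dots> = (\<Sum>s\<in>C. \<Sum>r\<in>C. \<Sum>t\<in>C. \<omega> t s * bd t r * v r s * w t / w s)"
      by (rule sum.cong[OF refl], rule sum.swap)
    also have "\<dots> = (\<Sum>s\<in>C. \<Sum>r\<in>C. \<Sum>t\<in>C. adj0 C w bd r t * \<omega> t s * v r s * w r / w s)"
      apply (rule sum.cong[OF refl], rule sum.cong[OF refl], rule sum.cong[OF refl])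
      using assms(2) by (auto simp: adj0_def)
    also have "\<dots> = l2_inner C w (comp C (adj0 C w bd) \<omega>) v"
      unfolding l2_expand comp_def by (simp add: sum_distrib_left sum_distrib_right sum_divide_distrib algebra_simps)
    finally show ?thesis .
  qed
  have e2: "l2_inner C w \<omega> (comp C v bd) = l2_inner C w (comp C \<omega> (adj0 C w bd)) v"
  proof -
    have "l2_inner C w \<omega> (comp C v bd) = (\<Sum>s\<in>C. \<Sum>t\<in>C. \<Sum>r\<in>C. \<omega> t s * v t r * bd r s * w t / w s)"
      unfolding l2_expand comp_def by (simp add: sum_distrib_left sum_distrib_right sum_divide_distrib algebra_simps)
    also have "\<dots> = (\<Sum>t\<in>C. \<Sum>s\<in>C. \<Sum>r\<in>C. \<omega> t s * v t r * bd r s * w t / w s)"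
      by (rule sum.swap)
    also have "\<dots> = (\<Sum>t\<in>C. \<Sum>r\<in>C. \<Sum>s\<in>C. \<omega> t s * v t r * bd r s * w t / w s)"
      by (rule sum.cong[OF refl], rule sum.swap)
    also have "\<dots> = (\<Sum>t\<in>C. \<Sum>r\<in>C. \<Sum>s\<in>C. \<omega> t s * adj0 C w bd s r * v t r * w t / w r)"
      apply (rule sum.cong[OF refl], rule sum.cong[OF refl], rule sum.cong[OF refl])
      using assms(2) by (auto simp: adj0_def)
    also have "\<dots> = (\<Sum>r\<in>C. \<Sum>t\<in>C. \<Sum>s\<in>C. \<omega> t s * adj0 C w bd s r * v t r * w t / w r)"
      by (rule sum.swap)
    also have "\<dots> = l2_inner C w (comp C \<omega> (adj0 C w bd)) v"
      unfolding l2_expand comp_def by (simp add: sum_distrib_left sum_distrib_right sum_divide_distrib algebra_simps)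
    finally show ?thesis .
  qed
  have lin: "\<And>A B (c::real). l2_inner C w A (\<lambda>t s. B t s - c * D t s) = l2_inner C w A B - c * l2_inner C w A D" for D
    unfolding l2_expand by (simp add: sum_subtractf[symmetric] sum_distrib_left algebra_simps diff_divide_distrib)
  have lin2: "\<And>A B (c::real). l2_inner C w (\<lambda>t s. B t s - c * D t s) A = l2_inner C w B A - c * l2_inner C w D A" for D
    unfolding l2_expand by (simp add: sum_subtractf[symmetric] sum_distrib_left algebra_simps diff_divide_distrib)
  show ?thesis
    unfolding cdiff_def lin lin2 using e1 e2 by simp
qed

theorem lemma2p4:
  fixes C :: "'c set" and dm :: "'c \<Rightarrow> nat" and face :: "'c \<Rightarrow> 'c \<Rightarrow> bool"
    and bd :: "'c lmap" and w :: "'c \<Rightarrow> real" and d :: nat and \<omega> :: "'c lmap"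
  assumes "regular_cell_complex C dm face bd"
    and "\<forall>s\<in>C. w s > 0"
    and "d \<ge> 1"
    and "\<omega> \<in> forms C dm face d"
  shows "codiff C dm face w bd d \<omega> =
    orth_proj C dm face w (d - 1)
      (\<lambda>t s. comp C (adjoint C w bd) \<omega> t s - (-1) ^ (d - 1) * comp C \<omega> (adjoint C w bd) t s)"
proof -
  have fin: "finite C" using assms(1) by (simp add: regular_cell_complex_def)
  show ?thesis
    unfolding codiff_def orth_proj_def adjoint_eq[OF fin assms(2)]
  proof (rule arg_cong[where f = The], rule ext)
    fix u
    show "(u \<in> forms C dm face (d - 1) \<and> (\<forall>v\<in>forms C dm face (d - 1). l2_inner C w u v = l2_inner C w \<omega> (cdiff C bd d v))) =
      (u \<in> forms C dm face (d - 1) \<and> (\<forall>v\<in>forms C dm face (d - 1).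
         l2_inner C w (\<lambda>t s. comp C (adj0 C w bd) \<omega> t s - (- 1) ^ (d - 1) * comp C \<omega> (adj0 C w bd) t s - u t s) v = 0))"
      by (simp only: l2_diff[of C w "\<lambda>t s. comp C (adj0 C w bd) \<omega> t s - (- 1) ^ (d - 1) * comp C \<omega> (adj0 C w bd) t s" u] key[OF fin assms(2)]) auto
  qed
qed

end
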